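(* If the semigroup $\mathbb NA$ is scored, then $\mathbb Q(A\cap\tau)\cap\mathbb Z^d=\mathbb Z(A\cap\tau)$ for all faces $\tau$ of the cone $\mathbb R_{\ge0}A$.
   Context: $A\subset\mathbb Z^d$ is a finite set generating the group $\mathbb Z^d$; $\mathbb NA$ its monoid. For a facet $\sigma$ of $\mathbb R_{\ge0}A$, $F_\sigma$ is the unique linear form with $F_\sigma(\mathbb R_{\ge0}A)\ge0$, $F_\sigma(\sigma)=0$, $F_\sigma(\mathbb Z^d)=\mathbb Z$. $\mathbb NA$ is scored if $\mathbb NA=\bigcap_{\sigma\text{ facet}}\{\mathbf a\in\mathbb Z^d:F_\sigma(\mathbf a)\in F_\sigma(\mathbb NA)\}$. *)

theory Defs
  imports "HOL-Analysis.Analysis"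
begin

text \<open>Lattice points of Z^d are modelled as int^'d; the ambient real space is real^'d.\<close>

definition rvec :: "int ^ 'd \<Rightarrow> real ^ 'd" where
  "rvec x = (\<chi> i. real_of_int (x $ i))"

definition real_cone :: "(int ^ 'd) set \<Rightarrow> (real ^ 'd) set" where
  "real_cone A = {\<Sum>a\<in>A. c a *\<^sub>R rvec a | c. \<forall>a\<in>A. c a \<ge> 0}"

definition monoid_of :: "(int ^ 'd) set \<Rightarrow> (int ^ 'd) set" where
  "monoid_of A = {(\<chi> i. \<Sum>a\<in>A. int (n a) * a $ i) | n. True}"

definition int_span :: "(int ^ 'd) set \<Rightarrow> (int ^ 'd) set" where
  "int_span S = {(\<chi> i. \<Sum>a\<in>S. k a * a $ i) | k. True}"

definition rat_span_lattice :: "(int ^ 'd) set \<Rightarrow> (int ^ 'd) set" where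
  "rat_span_lattice S = {x. \<exists>q :: int ^ 'd \<Rightarrow> rat.
      \<forall>i. rat_of_int (x $ i) = (\<Sum>a\<in>S. q a * rat_of_int (a $ i))}"

definition iform :: "int ^ 'd \<Rightarrow> int ^ 'd \<Rightarrow> int" where
  "iform c x = (\<Sum>i\<in>UNIV. c $ i * x $ i)"

definition rform :: "int ^ 'd \<Rightarrow> real ^ 'd \<Rightarrow> real" where
  "rform c y = (\<Sum>i\<in>UNIV. real_of_int (c $ i) * y $ i)"

definition is_facet_form :: "(int ^ 'd) set \<Rightarrow> (real ^ 'd) set \<Rightarrow> int ^ 'd \<Rightarrow> bool" where
  "is_facet_form A \<sigma> c \<longleftrightarrow>
     (\<forall>y\<in>real_cone A. rform c y \<ge> 0) \<and> (\<forall>y\<in>\<sigma>. rform c y = 0) \<and> range (iform c) = UNIV"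

definition facet_form :: "(int ^ 'd) set \<Rightarrow> (real ^ 'd) set \<Rightarrow> int ^ 'd" where
  "facet_form A \<sigma> = (THE c. is_facet_form A \<sigma> c)"

definition scored :: "(int ^ 'd) set \<Rightarrow> bool" where
  "scored A \<longleftrightarrow> monoid_of A =
     {x. \<forall>\<sigma>. \<sigma> facet_of real_cone A \<longrightarrow>
           iform (facet_form A \<sigma>) x \<in> iform (facet_form A \<sigma>) ` monoid_of A}"

end

theory Submission
  imports Defs
begin


lemma rvec_lin: "rvec (\<chi> i. \<Sum>a\<in>S. k a * a $ i) = (\<Sum>a\<in>S. real_of_int (k a) *\<^sub>R rvec a)"
  by (simp add: rvec_def vec_eq_iff sum_component)

lemma rvec_component[simp]: "rvec x $ i = real_of_int (x $ i)"
  by (simp add: rvec_def)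

lemma rvec_inj: "rvec x = rvec y \<longleftrightarrow> x = y"
  by (simp add: rvec_def vec_eq_iff)

lemma rform_inner: "rform c y = rvec c \<bullet> y"
  by (simp add: rform_def inner_vec_def)

lemma iform_rform: "real_of_int (iform c x) = rform c (rvec x)"
  by (simp add: rform_def iform_def)

lemma rform_add: "rform c (x + y) = rform c x + rform c y"
  by (simp add: rform_inner inner_add_right)

lemma rform_scale: "rform c (t *\<^sub>R x) = t * rform c x"
  by (simp add: rform_inner)

lemma rform_sum: "rform c (\<Sum>a\<in>S. f a) = (\<Sum>a\<in>S. rform c (f a))"
  by (simp add: rform_inner inner_sum_right)

lemma real_cone_mem: "(\<forall>a\<in>A. c a \<ge> 0) \<Longrightarrow> (\<Sum>a\<in>A. c a *\<^sub>R rvec a) \<in> real_cone A"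
  unfolding real_cone_def by blast

lemma convex_cone_sum:
  assumes "convex_cone T" "finite S" "\<And>a. a \<in> S \<Longrightarrow> f a \<in> T"
  shows "(\<Sum>a\<in>S. f a) \<in> T"
  using assms(2,3)
proof (induction S rule: finite_induct)
  case empty then show ?case using assms(1) convex_cone_contains_0 by simp
next
  case (insert x F) then show ?case using convex_cone_add[OF assms(1)] by (simp add: sum.insert)
qed

lemma real_cone_hull:
  assumes "finite A"
  shows "real_cone A = convex_cone hull (rvec ` A)"
proof (rule hull_unique[symmetric])
  show "rvec ` A \<subseteq> real_cone A"
  proof
    fix y assume "y \<in> rvec ` A"
    then obtain b where b: "b \<in> A" "y = rvec b" by auto
    have "(\<Sum>a\<in>A. (if a = b then 1 else 0) *\<^sub>R rvec a) = rvec b"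
      proof -
      have "(\<Sum>a\<in>A. (if a = b then 1 else 0) *\<^sub>R rvec a) = (\<Sum>a\<in>A. if a = b then rvec a else 0)"
        by (rule sum.cong) auto
      then show ?thesis using b assms by simp
    qed
    moreover have "(\<Sum>a\<in>A. (if a = b then 1 else 0) *\<^sub>R rvec a) \<in> real_cone A"
      by (rule real_cone_mem) auto
    ultimately show "y \<in> real_cone A" using b by simp
  qed
  show "convex_cone (real_cone A)"
    unfolding convex_cone_iff
  proof (intro conjI ballI allI impI)
    show "0 \<in> real_cone A"
      using real_cone_mem[of A "\<lambda>_. 0"] by simp
  next
    fix x y assume "x \<in> real_cone A" "y \<in> real_cone A"
    then obtain c1 c2 where c: "\<forall>a\<in>A. c1 a \<ge> 0" "x = (\<Sum>a\<in>A. c1 a *\<^sub>R rvec a)"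
       "\<forall>a\<in>A. c2 a \<ge> 0" "y = (\<Sum>a\<in>A. c2 a *\<^sub>R rvec a)"
      unfolding real_cone_def by blast
    have "x + y = (\<Sum>a\<in>A. (c1 a + c2 a) *\<^sub>R rvec a)"
      using c by (simp add: sum.distrib scaleR_add_left)
    then show "x + y \<in> real_cone A"
      using real_cone_mem[of A "\<lambda>a. c1 a + c2 a"] c by simp
  next
    fix x and t :: real assume "x \<in> real_cone A" "0 \<le> t"
    then obtain c1 where c: "\<forall>a\<in>A. c1 a \<ge> 0" "x = (\<Sum>a\<in>A. c1 a *\<^sub>R rvec a)"
      unfolding real_cone_def by blast
    have "t *\<^sub>R x = (\<Sum>a\<in>A. (t * c1 a) *\<^sub>R rvec a)"
      using c by (simp add: scaleR_sum_right)
    then show "t *\<^sub>R x \<in> real_cone A"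
      using real_cone_mem[of A "\<lambda>a. t * c1 a"] c \<open>0 \<le> t\<close> by simp
  qed
  fix T assume T: "rvec ` A \<subseteq> T" "convex_cone T"
  show "real_cone A \<subseteq> T"
  proof
    fix y assume "y \<in> real_cone A"
    then obtain c where c: "\<forall>a\<in>A. c a \<ge> 0" "y = (\<Sum>a\<in>A. c a *\<^sub>R rvec a)"
      unfolding real_cone_def by blast
    show "y \<in> T" unfolding c(2)
      by (rule convex_cone_sum[OF T(2) assms]) (use T c convex_cone_scaleR[OF T(2)] in blast)
  qed
qed

lemma polyhedron_real_cone: "finite A \<Longrightarrow> polyhedron (real_cone A)"
  by (simp add: real_cone_hull polyhedron_convex_cone_hull)

lemma zero_in_real_cone: "0 \<in> real_cone A"
  using real_cone_mem[of A "\<lambda>_. 0"] by simp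

lemma convex_real_cone: "finite A \<Longrightarrow> convex (real_cone A)"
  by (simp add: real_cone_hull convex_convex_cone_hull)

lemma real_cone_double: "finite A \<Longrightarrow> y \<in> real_cone A \<Longrightarrow> 2 *\<^sub>R y \<in> real_cone A"
  by (simp add: real_cone_hull conic_convex_cone_hull conic_mul)

lemma face_exposed:
  assumes "finite A" "F face_of real_cone A" "F \<noteq> {}"
  obtains u where "\<forall>y\<in>real_cone A. u \<bullet> y \<le> 0" "F = {y\<in>real_cone A. u \<bullet> y = 0}"
proof -
  from assms obtain a b where ab: "real_cone A \<subseteq> {x. a \<bullet> x \<le> b}" "F = real_cone A \<inter> {x. a \<bullet> x = b}"
    using exposed_face_of_polyhedron[OF polyhedron_real_cone[OF assms(1)]] exposed_face_of_def by metis
  have "0 \<le> b" using ab zero_in_real_cone by fastforce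
  from assms(3) obtain z where z: "z \<in> F" by blast
  then have "z \<in> real_cone A" "a \<bullet> z = b" using ab by auto
  then have "a \<bullet> (2 *\<^sub>R z) \<le> b" using ab real_cone_double[OF assms(1)] by blast
  then have "b = 0" using \<open>a \<bullet> z = b\<close> \<open>0 \<le> b\<close> by simp
  then show ?thesis using that[of a] ab by auto
qed



lemma span_rvec_A:
  assumes "int_span A = UNIV"
  shows "span (rvec ` A) = (UNIV :: (real^'d) set)"
proof -
  have "Basis \<subseteq> span (rvec ` (A :: (int^'d) set))"
  proof
    fix b :: "real^'d" assume "b \<in> Basis"
    then obtain i where b: "b = axis i 1" by (auto simp: Basis_vec_def)
    have "axis i (1::int) \<in> int_span A" using assms by simp
    then obtain k where k: "axis i (1::int) = (\<chi> j. \<Sum>a\<in>A. k a * a $ j)"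
      unfolding int_span_def by blast
    have "b = rvec (axis i (1::int))" by (simp add: b rvec_def axis_def vec_eq_iff)
    also have "\<dots> = (\<Sum>a\<in>A. real_of_int (k a) *\<^sub>R rvec a)" by (simp add: k rvec_lin)
    also have "\<dots> \<in> span (rvec ` A)"
      by (intro span_sum span_mul span_base) auto
    finally show "b \<in> span (rvec ` A)" .
  qed
  then have "span Basis \<subseteq> span (rvec ` A)"
    using span_minimal subspace_span by blast
  then show ?thesis by (auto simp: span_Basis)
qed

lemma span_real_cone:
  assumes "int_span A = UNIV" "finite A"
  shows "span (real_cone A) = (UNIV :: (real^'d) set)"
proof -
  have "rvec ` A \<subseteq> real_cone A" unfolding real_cone_hull[OF assms(2)] by (rule hull_subset)
  then have "span (rvec ` A) \<subseteq> span (real_cone A)" by (rule span_mono)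
  then show ?thesis using span_rvec_A[OF assms(1)] by blast
qed

lemma aff_dim_real_cone:
  assumes "int_span A = UNIV" "finite A"
  shows "aff_dim (real_cone (A :: (int^'d) set)) = int CARD('d)"
proof -
  have "0 \<in> affine hull real_cone A" by (rule hull_inc[OF zero_in_real_cone])
  then have "aff_dim (real_cone A) = int (dim (real_cone A))" by (rule aff_dim_zero)
  also have "dim (real_cone A) = dim (span (real_cone A))" by simp
  also have "\<dots> = CARD('d)" unfolding span_real_cone[OF assms] by (simp add: dim_UNIV)
  finally show ?thesis .
qed

lemma cone_not_in_hyperplane:
  assumes "int_span A = UNIV" "finite A" "(u :: real^'d) \<noteq> 0"
  shows "\<exists>y\<in>real_cone A. u \<bullet> y \<noteq> 0"
proof (rule ccontr)
  assume "\<not> ?thesis"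
  then have "real_cone A \<subseteq> {x. u \<bullet> x = 0}" by auto
  then have "span (real_cone A) \<subseteq> {x. u \<bullet> x = 0}"
    by (simp add: span_minimal subspace_hyperplane)
  then have "u \<bullet> u = 0" using span_real_cone[OF assms(1,2)] by blast
  then show False using assms(3) by simp
qed

lemma facet_span:
  assumes "int_span A = UNIV" "finite A" "\<sigma> facet_of real_cone (A :: (int^'d) set)"
    and u: "\<forall>y\<in>real_cone A. u \<bullet> y \<le> 0" "\<sigma> = {y\<in>real_cone A. u \<bullet> y = 0}"
  shows "u \<noteq> 0" "span \<sigma> = {x. u \<bullet> x = 0}"
proof -
  have ad: "aff_dim \<sigma> = int CARD('d) - 1"
    using assms(3) aff_dim_real_cone[OF assms(1,2)] by (simp add: facet_of_def)
  show "u \<noteq> 0"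
  proof
    assume "u = 0"
    then have "\<sigma> = real_cone A" using u by auto
    then show False using ad aff_dim_real_cone[OF assms(1,2)] by simp
  qed
  have "0 \<in> \<sigma>" using u zero_in_real_cone by simp
  then have "0 \<in> affine hull \<sigma>" by (rule hull_inc)
  then have "aff_dim \<sigma> = int (dim \<sigma>)" by (rule aff_dim_zero)
  moreover have "CARD('d) \<ge> 1" by (simp add: Suc_leI)
  ultimately have "int (dim \<sigma>) = int (CARD('d) - 1)" using ad by (simp add: of_nat_diff)
  then have d1: "dim (span \<sigma>) = CARD('d) - 1" by (simp only: dim_span of_nat_eq_iff)
  have sub: "span \<sigma> \<subseteq> {x. u \<bullet> x = 0}"
    using u by (intro span_minimal) (auto simp: subspace_hyperplane)
  have d2: "dim {x. u \<bullet> x = 0} = CARD('d) - 1"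
    using dim_hyperplane[OF \<open>u \<noteq> 0\<close>] by simp
  show "span \<sigma> = {x. u \<bullet> x = 0}"
    using subspace_dim_equal[OF subspace_span subspace_hyperplane sub] d1 d2 by simp
qed

lemma prop_form:
  assumes "span \<sigma> = {x. u \<bullet> x = 0}" "(u :: real^'d) \<noteq> 0" "\<forall>y\<in>\<sigma>. rform c y = 0"
  shows "\<exists>l. \<forall>y. rform c y = l * (u \<bullet> y)"
proof -
  have "span \<sigma> \<subseteq> {x. rvec c \<bullet> x = 0}"
    using assms(3) by (intro span_minimal) (auto simp: subspace_hyperplane rform_inner)
  then have h: "u \<bullet> x = 0 \<Longrightarrow> rvec c \<bullet> x = 0" for x using assms(1) by auto
  have uu: "u \<bullet> u \<noteq> 0" using assms(2) by simp
  show ?thesis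
  proof (intro exI allI)
    fix y
    let ?y = "y - ((u \<bullet> y) / (u \<bullet> u)) *\<^sub>R u"
    have "u \<bullet> ?y = 0" using uu by (simp add: inner_diff_right)
    then have "rvec c \<bullet> ?y = 0" by (rule h)
    then have "rvec c \<bullet> y = (u \<bullet> y) / (u \<bullet> u) * (rvec c \<bullet> u)"
      by (simp add: inner_diff_right)
    then show "rform c y = (rvec c \<bullet> u) / (u \<bullet> u) * (u \<bullet> y)"
      by (simp add: rform_inner)
  qed
qed

lemma rform_zero_imp:
  assumes "\<forall>y. rform c y = 0" shows "c = 0"
proof -
  have "rvec c \<bullet> rvec c = 0" using assms by (simp add: rform_inner)
  then have "rvec c = 0" by simp
  then show ?thesis by (simp add: rvec_def vec_eq_iff)
qed

lemma primitive_nonzero: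
  assumes "range (iform c) = UNIV" shows "c \<noteq> 0"
proof
  assume "c = 0"
  have "(1::int) \<in> range (iform c)" using assms by simp
  then obtain x where "1 = iform c x" by auto
  moreover have "iform c x = 0" using \<open>c = 0\<close> unfolding iform_def by simp
  ultimately show False by simp
qed



lemma det_Ints:
  fixes M :: "real^'n^'n"
  assumes "\<And>i j. M $ i $ j \<in> \<int>"
  shows "det M \<in> \<int>"
  unfolding det_def
  by (intro Ints_sum Ints_mult Ints_prod assms) (simp add: Ints_of_int)

lemma cramer_int:
  fixes M :: "real^'d^'d"
  assumes dM: "det M \<noteq> 0" and Mint: "\<And>i j. M $ i $ j \<in> \<int>"
  shows "\<exists>C::int^'d. M *v rvec C = det M *\<^sub>R axis i0 1"
proof -
  define b :: "real^'d" where "b = axis i0 1"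
  define Cr :: "real^'d" where "Cr = (\<chi> k. det(\<chi> i j. if j=k then b$i else M$i$j))"
  have X: "M *v (\<chi> k. det(\<chi> i j. if j=k then b$i else M$i$j) / det M) = b"
    by (subst cramer[OF dM]) (rule refl)
  have "(\<chi> k. det(\<chi> i j. if j=k then b$i else M$i$j) / det M) = (1 / det M) *\<^sub>R Cr"
    by (simp add: Cr_def vec_eq_iff divide_inverse mult.commute)
  then have "(1 / det M) *\<^sub>R (M *v Cr) = b" using X by (simp add: matrix_vector_mult_scaleR)
  then have "det M *\<^sub>R ((1 / det M) *\<^sub>R (M *v Cr)) = det M *\<^sub>R b" by simp
  then have MC: "M *v Cr = det M *\<^sub>R b" using dM by simp
  have Crint: "Cr $ k \<in> \<int>" for k
  proof -
    have "Cr $ k = det (\<chi> i j. if j=k then b$i else M$i$j)" by (simp add: Cr_def)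
    also have "\<dots> \<in> \<int>"
    proof (rule det_Ints)
      fix i j
      show "(\<chi> i j. if j=k then b$i else M$i$j) $ i $ j \<in> \<int>"
        using Mint by (simp add: b_def axis_def)
    qed
    finally show ?thesis .
  qed
  define C :: "int^'d" where "C = (\<chi> k. \<lfloor>Cr $ k\<rfloor>)"
  have "rvec C = Cr"
    unfolding C_def rvec_def vec_eq_iff using Crint by simp
  then have "M *v rvec C = det M *\<^sub>R axis i0 1" using MC unfolding b_def by simp
  then show ?thesis by blast
qed



lemma support_in_face:
  assumes "finite A" "\<forall>y\<in>real_cone A. u \<bullet> y \<le> 0" "F = {y\<in>real_cone A. u \<bullet> y = 0}"
    and "\<forall>a\<in>A. c a \<ge> 0" "(\<Sum>a\<in>A. c a *\<^sub>R rvec a) \<in> F" "b \<in> A" "c b > 0"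
  shows "rvec b \<in> F"
proof -
  have rA: "rvec a \<in> real_cone A" if "a \<in> A" for a
    using that real_cone_hull[OF assms(1)] hull_subset by fastforce
  have "u \<bullet> (\<Sum>a\<in>A. c a *\<^sub>R rvec a) = 0" using assms(3,5) by simp
  then have s0: "(\<Sum>a\<in>A. c a * (u \<bullet> rvec a)) = 0" by (simp add: inner_sum_right)
  have nn: "c a * (u \<bullet> rvec a) \<le> 0" if "a \<in> A" for a
  proof -
    have "c a \<ge> 0" using assms(4) that by blast
    moreover have "u \<bullet> rvec a \<le> 0" using assms(2) rA[OF that] by blast
    ultimately show ?thesis by (rule mult_nonneg_nonpos)
  qed
  have "c b * (u \<bullet> rvec b) = 0"
  proof (rule ccontr)
    assume "c b * (u \<bullet> rvec b) \<noteq> 0"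
    then have neg: "c b * (u \<bullet> rvec b) < 0" using nn[OF assms(6)] by linarith
    have "(\<Sum>a\<in>A. c a * (u \<bullet> rvec a)) = c b * (u \<bullet> rvec b) + (\<Sum>a\<in>A-{b}. c a * (u \<bullet> rvec a))"
      using assms(1,6) by (rule sum.remove)
    also have "(\<Sum>a\<in>A-{b}. c a * (u \<bullet> rvec a)) \<le> 0"
      by (rule sum_nonpos) (use nn in blast)
    finally show False using neg s0 by linarith
  qed
  then have "u \<bullet> rvec b = 0" using assms(7) by simp
  then show ?thesis using assms(3) rA[OF assms(6)] by simp
qed


lemma face_span_generators:
  assumes "finite A" "\<forall>y\<in>real_cone A. u \<bullet> y \<le> 0" "F = {y\<in>real_cone A. u \<bullet> y = 0}"
  shows "F \<subseteq> span (rvec ` {a\<in>A. rvec a \<in> F})"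
proof
  fix y assume y: "y \<in> F"
  then have "y \<in> real_cone A" using assms(3) by simp
  then obtain c where c: "\<forall>a\<in>A. c a \<ge> 0" "y = (\<Sum>a\<in>A. c a *\<^sub>R rvec a)"
    unfolding real_cone_def by blast
  have "c a *\<^sub>R rvec a \<in> span (rvec ` {a\<in>A. rvec a \<in> F})" if "a \<in> A" for a
  proof (cases "c a > 0")
    case True
    then have "rvec a \<in> F" using support_in_face[OF assms c(1)] y c(2) that by simp
    then show ?thesis using that by (intro span_mul span_base) auto
  next
    case False
    then have "c a = 0" using c(1) that by force
    then show ?thesis by (simp add: span_zero)
  qed
  then show "y \<in> span (rvec ` {a\<in>A. rvec a \<in> F})" unfolding c(2) by (intro span_sum) auto
qed

lemma normal_exists:
  assumes "int_span A = UNIV" "finite A" "\<sigma> facet_of real_cone (A :: (int^'d) set)"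
    and u: "\<forall>y\<in>real_cone A. u \<bullet> y \<le> 0" "\<sigma> = {y\<in>real_cone A. u \<bullet> y = 0}"
  shows "\<exists>C. C \<noteq> 0 \<and> (\<forall>y\<in>\<sigma>. rform C y = 0)"
proof -
  note fs = facet_span[OF assms]
  define V where "V = rvec ` {a\<in>A. rvec a \<in> \<sigma>}"
  have Vs: "V \<subseteq> \<sigma>" unfolding V_def by auto
  have sV: "\<sigma> \<subseteq> span V" unfolding V_def by (rule face_span_generators[OF assms(2) u])
  have spV: "span V = span \<sigma>" using Vs sV span_eq span_superset by (metis subset_trans)
  obtain S0 where S0: "S0 \<subseteq> V" "independent S0" "V \<subseteq> span S0"
    using maximal_independent_subset by blast
  have spS0: "span S0 = span V" using S0 span_eq span_superset by (metis subset_trans)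
  have "CARD('d) \<ge> 1" by (simp add: Suc_leI)
  have "dim (span \<sigma>) = CARD('d) - 1"
    using fs(2) dim_hyperplane[OF fs(1)] by simp
  then have cS0: "card S0 = CARD('d) - 1"
    using spS0 spV dim_eq_card_independent[OF S0(2)] by (metis dim_span)
  have "S0 \<subseteq> rvec ` A" using S0(1) unfolding V_def by auto
  then obtain B where B: "S0 \<subseteq> B" "B \<subseteq> rvec ` A" "independent B" "rvec ` A \<subseteq> span B"
    using maximal_independent_subset_extend S0(2) by metis
  have "span (rvec ` A) \<subseteq> span B" by (rule span_minimal[OF B(4) subspace_span])
  then have spB: "span B = UNIV"
    using span_rvec_A[OF assms(1)] by auto
  have dU: "dim (UNIV :: (real^'d) set) = CARD('d)" by simp
  have "dim B = dim (span B)" by (rule dim_span[symmetric])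
  then have "dim B = CARD('d)" using dU spB by simp
  then have cB: "card B = CARD('d)"
    using dim_eq_card_independent[OF B(3)] by simp
  have fB: "finite B" using B(2) assms(2) finite_subset by blast
  have "B - S0 \<noteq> {}"
  proof
    assume "B - S0 = {}"
    then have "B = S0" using B(1) by auto
    then have "card S0 = CARD('d)" using cB by simp
    then show False using cS0 \<open>CARD('d) \<ge> 1\<close> by arith
  qed
  then obtain w where w: "w \<in> B" "w \<notin> S0" by blast
  obtain g where g: "bij_betw g (UNIV :: 'd set) B"
    using finite_same_card_bij[of "UNIV :: 'd set" B] fB cB by auto
  then obtain i0 where i0: "g i0 = w" using w(1) by (metis bij_betw_iff_bijections)
  define M :: "real^'d^'d" where "M = (\<chi> i. g i)"
  have rowi: "row i M = g i" for i by (simp add: row_def M_def vec_lambda_eta)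
  have "rows M = range g" unfolding rows_def by (auto simp: rowi)
  then have rowsM: "rows M = B" using g by (simp add: bij_betw_def)
  have "invertible M"
    unfolding invertible_left_inverse matrix_left_invertible_span_rows rowsM using spB .
  then have dM: "det M \<noteq> 0" by (simp add: invertible_det_nz)
  have gint: "g i $ j \<in> \<int>" for i j
  proof -
    have "g i \<in> B" using g by (auto simp: bij_betw_def)
    then have "g i \<in> rvec ` A" using B(2) by blast
    then obtain a where "g i = rvec a" by blast
    then have "g i $ j = of_int (a $ j)" by simp
    then show ?thesis by (simp add: Ints_of_int)
  qed
  have Mint: "M $ i $ j \<in> \<int>" for i j using gint by (simp add: M_def)
  obtain C where MC: "M *v rvec C = det M *\<^sub>R axis i0 1" using cramer_int[OF dM Mint] by blast
  define Cr where "Cr = rvec C"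
  have rC: "rvec C = Cr" by (simp add: Cr_def)
  have gC: "g i \<bullet> Cr = (if i = i0 then det M else 0)" for i
  proof -
    have "(M *v Cr) $ i = g i \<bullet> Cr" by (simp add: matrix_vector_mul_component M_def)
    then show ?thesis using MC by (cases "i = i0") (auto simp: Cr_def axis_def)
  qed
  have "C \<noteq> 0"
  proof
    assume "C = 0"
    then have "Cr = 0" using rC by (simp add: rvec_def vec_eq_iff)
    then show False using gC[of i0] dM by simp
  qed
  moreover have "S0 \<subseteq> {y. Cr \<bullet> y = 0}"
  proof
    fix v assume v: "v \<in> S0"
    then have "v \<in> B" using B(1) by auto
    then obtain i where "g i = v" using g by (metis bij_betw_iff_bijections)
    moreover have "i \<noteq> i0" using v w(2) i0 \<open>g i = v\<close> by auto
    ultimately show "v \<in> {y. Cr \<bullet> y = 0}" using gC[of i] by (simp add: inner_commute)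
  qed
  then have "span S0 \<subseteq> {y. Cr \<bullet> y = 0}"
    by (intro span_minimal) (auto simp: subspace_hyperplane)
  then have "\<forall>y\<in>\<sigma>. rform C y = 0"
  proof (intro ballI)
    fix y assume "y \<in> \<sigma>"
    then have "y \<in> span S0" using sV spS0 by blast
    then have "Cr \<bullet> y = 0" using \<open>span S0 \<subseteq> {y. Cr \<bullet> y = 0}\<close> by blast
    then show "rform C y = 0" by (simp add: rform_inner rC)
  qed
  ultimately show ?thesis by blast
qed



lemma iform_add: "iform c (x + y) = iform c x + iform c y"
  by (simp add: iform_def sum.distrib algebra_simps)

lemma iform_diff: "iform c (x - y) = iform c x - iform c y"
  by (simp add: iform_def sum_subtractf algebra_simps)

lemma iform_smult: "iform c (t *s x) = t * iform c x"
  by (simp add: iform_def sum_distrib_left algebra_simps)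

lemma iform_axis: "iform c (axis k t) = c $ k * t"
proof -
  have "iform c (axis k t) = (\<Sum>i\<in>UNIV. if i = k then c $ k * t else 0)"
    unfolding iform_def by (rule sum.cong) (auto simp: axis_def)
  then show ?thesis by simp
qed

lemma iform_scalec: "iform (\<chi> i. t * c $ i) x = t * iform c x"
  by (simp add: iform_def sum_distrib_left algebra_simps)

lemma rform_scalec: "rform (\<chi> i. t * c $ i) y = real_of_int t * rform c y"
  by (simp add: rform_def sum_distrib_left algebra_simps)

lemma primitive_normalize:
  assumes "C \<noteq> (0 :: int^'d)"
  shows "\<exists>g c. g > 0 \<and> C = (\<chi> i. g * c $ i) \<and> range (iform c) = UNIV"
proof -
  define P where "P n \<longleftrightarrow> n > 0 \<and> int n \<in> range (iform C)" for n :: nat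
  obtain k where k: "C $ k \<noteq> 0" using assms by (auto simp: vec_eq_iff)
  have "iform C (axis k (sgn (C $ k))) = \<bar>C $ k\<bar>" by (simp add: iform_axis abs_sgn)
  then have "P (nat \<bar>C $ k\<bar>)" using k unfolding P_def by (metis abs_ge_zero int_nat_eq rangeI zero_less_abs_iff zero_less_nat_eq)
  then have Pg: "P (LEAST n. P n)" by (rule LeastI)
  define g where "g = (LEAST n. P n)"
  have g0: "g > 0" and "int g \<in> range (iform C)" using Pg unfolding g_def P_def by auto
  then obtain x0 where x0: "iform C x0 = int g" by auto
  have dv: "int g dvd iform C x" for x
  proof -
    define m where "m = iform C x"
    have "iform C (x - (m div int g) *s x0) = m - (m div int g) * int g"
      by (simp add: iform_diff iform_smult x0 m_def)
    also have "\<dots> = m mod int g" by (simp add: minus_div_mult_eq_mod)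
    finally have r: "iform C (x - (m div int g) *s x0) = m mod int g" .
    have "m mod int g = 0"
    proof (rule ccontr)
      assume ne: "m mod int g \<noteq> 0"
      have ge: "m mod int g \<ge> 0" using g0 by simp
      have "P (nat (m mod int g))" unfolding P_def using r ne ge
        by (metis int_nat_eq less_le rangeI zero_less_nat_eq)
      then have "g \<le> nat (m mod int g)" unfolding g_def by (rule Least_le)
      then have "int g \<le> m mod int g" using ge by (simp add: le_nat_iff)
      moreover have "m mod int g < int g" using g0 by simp
      ultimately show False by linarith
    qed
    then show ?thesis unfolding m_def by (simp add: dvd_eq_mod_eq_0)
  qed
  define c where "c = (\<chi> i. C $ i div int g)"
  have Cc: "C = (\<chi> i. int g * c $ i)"
  proof -
    have "int g dvd C $ i" for i using dv[of "axis i 1"] by (simp add: iform_axis)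
    then show ?thesis by (simp add: c_def vec_eq_iff)
  qed
  have "iform C x0 = int g * iform c x0" by (subst Cc) (simp add: iform_scalec)
  then have c1: "iform c x0 = 1" using x0 g0 by simp
  have "range (iform c) = UNIV"
  proof (rule surjI)
    fix n show "iform c (n *s x0) = n" by (simp add: iform_smult c1)
  qed
  then show ?thesis using Cc g0 by (intro exI[of _ "int g"] exI[of _ c]) auto
qed

lemma facet_form_exists:
  assumes "int_span A = UNIV" "finite A" "\<sigma> facet_of real_cone (A :: (int^'d) set)"
  shows "\<exists>c. is_facet_form A \<sigma> c \<and> \<sigma> = {y\<in>real_cone A. rform c y = 0}"
proof -
  have "\<sigma> face_of real_cone A" "\<sigma> \<noteq> {}" using assms(3) by (auto simp: facet_of_def)
  then obtain u where u: "\<forall>y\<in>real_cone A. u \<bullet> y \<le> 0" "\<sigma> = {y\<in>real_cone A. u \<bullet> y = 0}"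
    using face_exposed[OF assms(2)] by metis
  note fs = facet_span[OF assms u]
  obtain C where C: "C \<noteq> 0" "\<forall>y\<in>\<sigma>. rform C y = 0" using normal_exists[OF assms u] by blast
  obtain l where l: "\<forall>y. rform C y = l * (u \<bullet> y)" using prop_form[OF fs(2) fs(1) C(2)] by blast
  have l0: "l \<noteq> 0"
  proof
    assume "l = 0" then have "\<forall>y. rform C y = 0" using l by simp
    then show False using rform_zero_imp C(1) by blast
  qed
  obtain g c' where gc: "g > 0" "C = (\<chi> i. g * c' $ i)" "range (iform c') = UNIV"
    using primitive_normalize[OF C(1)] by blast
  define s :: int where "s = (if l > 0 then -1 else 1)"
  define c where "c = (\<chi> i. s * c' $ i)"
  define \<mu> where "\<mu> = real_of_int s * l / real_of_int g"
  have rc: "rform c y = \<mu> * (u \<bullet> y)" for y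
  proof -
    have "rform C y = real_of_int g * rform c' y" using gc(2) by (simp add: rform_scalec)
    then have "rform c' y = l * (u \<bullet> y) / real_of_int g" using l gc(1) by (simp add: field_simps)
    then show ?thesis by (simp add: c_def rform_scalec \<mu>_def)
  qed
  have mu: "\<mu> < 0"
    using l0 gc(1) unfolding \<mu>_def s_def by (auto simp: divide_neg_pos)
  have "is_facet_form A \<sigma> c"
    unfolding is_facet_form_def
  proof (intro conjI ballI)
    fix y assume "y \<in> real_cone A"
    then have "u \<bullet> y \<le> 0" using u(1) by blast
    then show "rform c y \<ge> 0" using mu by (simp add: rc mult_nonpos_nonpos)
  next
    fix y assume "y \<in> \<sigma>"
    then show "rform c y = 0" using u(2) by (simp add: rc)
  next
    have ss: "s * s = 1" by (simp add: s_def)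
    have "n \<in> range (iform c)" for n
    proof -
      obtain x where "iform c' x = s * n" using gc(3) by (metis UNIV_I image_iff)
      then have "iform c x = n" using ss by (simp add: c_def iform_scalec mult.assoc[symmetric])
      then show ?thesis by (metis rangeI)
    qed
    then show "range (iform c) = UNIV" by auto
  qed
  moreover have "\<sigma> = {y\<in>real_cone A. rform c y = 0}"
    using u(2) mu by (auto simp: rc)
  ultimately show ?thesis by blast
qed



lemma facet_form_unique:
  assumes "int_span A = UNIV" "finite A" "\<sigma> facet_of real_cone (A :: (int^'d) set)"
    and c1: "is_facet_form A \<sigma> c1" and c2: "is_facet_form A \<sigma> c2"
  shows "c1 = c2"
proof -
  have "\<sigma> face_of real_cone A" "\<sigma> \<noteq> {}" using assms(3) by (auto simp: facet_of_def)
  then obtain u where u: "\<forall>y\<in>real_cone A. u \<bullet> y \<le> 0" "\<sigma> = {y\<in>real_cone A. u \<bullet> y = 0}"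
    using face_exposed[OF assms(2)] by metis
  note fs = facet_span[OF assms(1-3) u]
  have p1: "\<forall>y\<in>real_cone A. rform c1 y \<ge> 0" "\<forall>y\<in>\<sigma>. rform c1 y = 0" "range (iform c1) = UNIV"
    using c1 by (auto simp: is_facet_form_def)
  have p2: "\<forall>y\<in>real_cone A. rform c2 y \<ge> 0" "\<forall>y\<in>\<sigma>. rform c2 y = 0" "range (iform c2) = UNIV"
    using c2 by (auto simp: is_facet_form_def)
  obtain l1 where l1: "\<forall>y. rform c1 y = l1 * (u \<bullet> y)" using prop_form[OF fs(2) fs(1) p1(2)] by blast
  obtain l2 where l2: "\<forall>y. rform c2 y = l2 * (u \<bullet> y)" using prop_form[OF fs(2) fs(1) p2(2)] by blast
  obtain y0 where y0: "y0 \<in> real_cone A" "u \<bullet> y0 \<noteq> 0"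
    using cone_not_in_hyperplane[OF assms(1,2) fs(1)] by blast
  then have uy0: "u \<bullet> y0 < 0" using u(1) by force
  have "l1 \<noteq> 0"
  proof
    assume "l1 = 0" then have "\<forall>y. rform c1 y = 0" using l1 by simp
    then show False using rform_zero_imp primitive_nonzero[OF p1(3)] by blast
  qed
  moreover have "l1 * (u \<bullet> y0) \<ge> 0" using p1(1) y0(1) l1 by metis
  ultimately have l1n: "l1 < 0" using uy0 by (smt (verit) mult_pos_neg)
  obtain x1 where x1: "iform c1 x1 = 1" using p1(3) by (metis UNIV_I image_iff)
  obtain x2 where x2: "iform c2 x2 = 1" using p2(3) by (metis UNIV_I image_iff)
  define t1 where "t1 = u \<bullet> rvec x1"
  define t2 where "t2 = u \<bullet> rvec x2"
  have e1: "l1 * t1 = 1" using x1 l1 iform_rform[of c1 x1] t1_def by simp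
  have e2: "l2 * t2 = 1" using x2 l2 iform_rform[of c2 x2] t2_def by simp
  define m where "m = iform c2 x1"
  define k where "k = iform c1 x2"
  have em: "real_of_int m = l2 * t1" using l2 iform_rform[of c2 x1] m_def t1_def by simp
  have ek: "real_of_int k = l1 * t2" using l1 iform_rform[of c1 x2] k_def t2_def by simp
  have "real_of_int m * real_of_int k = (l1 * t1) * (l2 * t2)" using em ek by (simp add: algebra_simps)
  then have "real_of_int (m * k) = 1" using e1 e2 by simp
  then have mk: "m * k = 1" by (metis of_int_eq_1_iff)
  have t1n: "t1 < 0" using e1 l1n by (smt (verit) mult_neg_neg mult_nonpos_nonneg)
  have "l2 \<noteq> 0" using e2 by auto
  have "l2 * (u \<bullet> y0) \<ge> 0" using p2(1) y0(1) l2 by metis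
  then have l2n: "l2 < 0" using uy0 \<open>l2 \<noteq> 0\<close> by (smt (verit) mult_pos_neg)
  have "real_of_int m > 0" using em l2n t1n by (simp add: mult_neg_neg)
  then have "m > 0" by simp
  then have "m = 1" using mk pos_zmult_eq_1_iff by blast
  then have "l2 * t1 = l1 * t1" using em e1 by simp
  then have "l1 = l2" using e1 by (metis mult_cancel_right mult_not_zero zero_neq_one)
  then have eq: "rform c1 y = rform c2 y" for y using l1 l2 by simp
  show ?thesis
    unfolding vec_eq_iff
  proof (intro allI)
    fix i
    have "real_of_int (c1 $ i) = rform c1 (rvec (axis i 1))" using iform_rform[of c1 "axis i 1"] by (simp add: iform_axis)
    also have "\<dots> = rform c2 (rvec (axis i 1))" by (rule eq)
    also have "\<dots> = real_of_int (c2 $ i)" using iform_rform[of c2 "axis i 1"] by (simp add: iform_axis)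
    finally show "c1 $ i = c2 $ i" by simp
  qed
qed

lemma facet_form_props:
  assumes "int_span A = UNIV" "finite A" "\<sigma> facet_of real_cone (A :: (int^'d) set)"
  shows "is_facet_form A \<sigma> (facet_form A \<sigma>)"
    "\<sigma> = {y\<in>real_cone A. rform (facet_form A \<sigma>) y = 0}"
proof -
  obtain c0 where c0: "is_facet_form A \<sigma> c0" "\<sigma> = {y\<in>real_cone A. rform c0 y = 0}"
    using facet_form_exists[OF assms] by blast
  have "facet_form A \<sigma> = c0"
    unfolding facet_form_def
    by (rule the_equality[where P="\<lambda>c. is_facet_form A \<sigma> c", OF c0(1)]) (rule facet_form_unique[OF assms _ c0(1)])
  then show "is_facet_form A \<sigma> (facet_form A \<sigma>)"
    "\<sigma> = {y\<in>real_cone A. rform (facet_form A \<sigma>) y = 0}" using c0 by auto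
qed



lemma iform_lin: "iform c (\<chi> i. \<Sum>a\<in>S. k a * a $ i) = (\<Sum>a\<in>S. k a * iform c a)"
proof -
  have "iform c (\<chi> i. \<Sum>a\<in>S. k a * a $ i) = (\<Sum>i\<in>UNIV. \<Sum>a\<in>S. k a * (c $ i * a $ i))"
    by (simp add: iform_def sum_distrib_left mult.left_commute)
  also have "\<dots> = (\<Sum>a\<in>S. \<Sum>i\<in>UNIV. k a * (c $ i * a $ i))" by (rule sum.swap)
  also have "\<dots> = (\<Sum>a\<in>S. k a * iform c a)" by (simp add: iform_def sum_distrib_left)
  finally show ?thesis .
qed

lemma monoid_mem: "(\<chi> i. \<Sum>a\<in>A. int (n a) * a $ i) \<in> monoid_of A"
  unfolding monoid_of_def by blast

lemma large_in_image:
  assumes "range (iform c) = UNIV" "int_span A = UNIV" "\<forall>a\<in>A. iform c a \<ge> 0"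
  shows "\<exists>K. \<forall>n\<ge>K. n \<in> iform c ` monoid_of A"
proof -
  have "(1::int) \<in> range (iform c)" using assms(1) by simp
  then obtain z where z: "1 = iform c z" by (rule rangeE)
  have "z \<in> int_span A" using assms(2) by simp
  then obtain k where k: "z = (\<chi> i. \<Sum>a\<in>A. k a * a $ i)" unfolding int_span_def by blast
  define f where "f a = iform c a" for a
  define kp where "kp a = max (k a) 0" for a
  define km where "km a = max (- k a) 0" for a
  define P where "P = (\<Sum>a\<in>A. kp a * f a)"
  define Q where "Q = (\<Sum>a\<in>A. km a * f a)"
  have "iform c z = (\<Sum>a\<in>A. k a * iform c a)" unfolding k by (rule iform_lin)
  then have "(\<Sum>a\<in>A. k a * f a) = 1" using z by (simp add: f_def)
  moreover have "k a * f a = kp a * f a - km a * f a" for a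
    by (simp add: kp_def km_def max_def algebra_simps)
  ultimately have PQ: "P - Q = 1" unfolding P_def Q_def by (simp add: sum_subtractf)
  have Q0: "Q \<ge> 0" unfolding Q_def using assms(3) by (intro sum_nonneg) (simp add: km_def f_def)
  have comb: "\<alpha> * Q + \<beta> * P \<in> iform c ` monoid_of A" if "\<alpha> \<ge> 0" "\<beta> \<ge> 0" for \<alpha> \<beta>
  proof -
    define n where "n a = nat (\<alpha> * km a + \<beta> * kp a)" for a
    have nn: "int (n a) = \<alpha> * km a + \<beta> * kp a" for a
      using that by (simp add: n_def km_def kp_def)
    have "iform c (\<chi> i. \<Sum>a\<in>A. int (n a) * a $ i) = (\<Sum>a\<in>A. int (n a) * f a)"
      by (simp add: iform_lin f_def)
    also have "\<dots> = \<alpha> * Q + \<beta> * P"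
      by (simp add: nn Q_def P_def distrib_right sum.distrib sum_distrib_left mult.assoc)
    finally show ?thesis by (rule image_eqI[OF sym monoid_mem])
  qed
  show ?thesis
  proof (cases "Q = 0")
    case True
    then have "P = 1" using PQ by simp
    show ?thesis
    proof (intro exI[of _ 0] allI impI)
      fix n :: int assume "n \<ge> 0"
      then show "n \<in> iform c ` monoid_of A" using comb[of 0 n] \<open>P = 1\<close> by simp
    qed
  next
    case False
    then have Qp: "Q > 0" using Q0 by simp
    show ?thesis
    proof (intro exI[of _ "Q * Q"] allI impI)
      fix n :: int assume n: "n \<ge> Q * Q"
      define q where "q = n div Q"
      define r where "r = n mod Q"
      have nqr: "n = q * Q + r" by (simp add: q_def r_def)
      have r0: "0 \<le> r" "r < Q" using Qp by (auto simp: r_def)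
      have "q \<ge> Q"
      proof (rule ccontr)
        assume "\<not> q \<ge> Q" then have "q \<le> Q - 1" by simp
        then have "q * Q \<le> (Q - 1) * Q" using Qp by (simp add: mult_right_mono)
        then show False using n nqr r0 by (simp add: algebra_simps)
      qed
      then have "(q - r) * Q + r * P = n" using nqr PQ
        by (simp add: algebra_simps)
      then show "n \<in> iform c ` monoid_of A" using comb[of "q - r" r] r0 \<open>q \<ge> Q\<close> by simp
    qed
  qed
qed



lemma facets_finite: "finite A \<Longrightarrow> finite {\<sigma>. \<sigma> facet_of real_cone A}"
  by (rule finite_subset[OF _ finite_polyhedron_faces[OF polyhedron_real_cone]]) (auto simp: facet_of_def)

lemma rvec_add: "rvec (x + y) = rvec x + rvec y"
  by (simp add: rvec_def vec_eq_iff)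

lemma rvec_smult: "rvec (t *s x) = real_of_int t *\<^sub>R rvec x"
  by (simp add: rvec_def vec_eq_iff)

lemma rA_in_cone: "finite A \<Longrightarrow> a \<in> A \<Longrightarrow> rvec a \<in> real_cone A"
  using real_cone_hull hull_subset by fastforce

lemma per_facet:
  assumes "int_span A = UNIV" "finite A" "\<sigma> facet_of real_cone (A :: (int^'d) set)"
    and ut: "\<forall>y\<in>real_cone A. ut \<bullet> y \<le> 0" "\<tau> = {y\<in>real_cone A. ut \<bullet> y = 0}"
    and nsub: "\<not> \<tau> \<subseteq> \<sigma>"
    and s: "s = (\<chi> i. \<Sum>b\<in>{a\<in>A. rvec a \<in> \<tau>}. b $ i)"
  shows "\<exists>N0. \<forall>N\<ge>N0. iform (facet_form A \<sigma>) (x + int N *s s) \<in> iform (facet_form A \<sigma>) ` monoid_of A"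
proof -
  define c where "c = facet_form A \<sigma>"
  define B where "B = {a\<in>A. rvec a \<in> \<tau>}"
  have fB: "finite B" using assms(2) by (simp add: B_def)
  note pc = facet_form_props[OF assms(1-3), folded c_def]
  have cnn: "\<forall>y\<in>real_cone A. rform c y \<ge> 0" "range (iform c) = UNIV"
    using pc(1) by (auto simp: is_facet_form_def)
  have inn: "iform c a \<ge> 0" if "a \<in> A" for a
  proof -
    have "rform c (rvec a) \<ge> 0" using cnn(1) rA_in_cone[OF assms(2) that] by blast
    then show ?thesis using iform_rform[of c a] by simp
  qed
  obtain K where K: "\<forall>n\<ge>K. n \<in> iform c ` monoid_of A"
    using large_in_image[OF cnn(2) assms(1)] inn by blast
  obtain z where z: "z \<in> \<tau>" "z \<notin> \<sigma>" using nsub by blast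
  then have zc: "z \<in> real_cone A" using ut(2) by blast
  have "rform c z \<ge> 0" using cnn(1) zc by blast
  moreover have "rform c z \<noteq> 0" using z(2) zc pc(2) by blast
  ultimately have rz: "rform c z > 0" by simp
  obtain t where t: "\<forall>a\<in>A. t a \<ge> 0" "z = (\<Sum>a\<in>A. t a *\<^sub>R rvec a)"
    using zc unfolding real_cone_def by blast
  have rzs: "rform c z = (\<Sum>a\<in>A. t a * rform c (rvec a))" unfolding t(2) by (simp add: rform_sum rform_scale)
  have "\<exists>a\<in>A. t a * rform c (rvec a) > 0"
  proof (rule ccontr)
    assume "\<not> ?thesis"
    then have "\<forall>a\<in>A. t a * rform c (rvec a) \<le> 0" by (simp add: not_less)
    then have "(\<Sum>a\<in>A. t a * rform c (rvec a)) \<le> 0" by (intro sum_nonpos) blast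
    then show False using rz rzs by simp
  qed
  then obtain a where a: "a \<in> A" "t a * rform c (rvec a) > 0" by blast
  have "t a \<noteq> 0" using a(2) by auto
  then have ta: "t a > 0" using t(1) a(1) by force
  then have "rform c (rvec a) > 0" using a(2) zero_less_mult_pos by blast
  then have ia: "iform c a \<ge> 1" using iform_rform[of c a] by simp
  have "rvec a \<in> \<tau>" using support_in_face[OF assms(2) ut t(1)] z(1) t(2) a(1) ta by simp
  then have aB: "a \<in> B" using a(1) by (simp add: B_def)
  have "s = (\<chi> i. \<Sum>b\<in>B. 1 * b $ i)" using s by (simp add: B_def)
  then have "iform c s = (\<Sum>b\<in>B. 1 * iform c b)" by (simp only: iform_lin)
  also have "\<dots> \<ge> iform c a"
    using member_le_sum[of a B "\<lambda>b. 1 * iform c b"] aB fB inn by (simp add: B_def)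
  finally have is1: "iform c s \<ge> 1" using ia by simp
  show ?thesis
  proof (intro exI[of _ "nat (K - iform c x)"] allI impI)
    fix N assume N: "N \<ge> nat (K - iform c x)"
    have "iform c (x + int N *s s) = iform c x + int N * iform c s"
      by (simp add: iform_add iform_smult)
    also have "\<dots> \<ge> iform c x + int N" using is1 by (simp add: mult_left_mono[of 1 "iform c s" "int N", simplified])
    finally have "iform c (x + int N *s s) \<ge> K" using N by linarith
    then show "iform (facet_form A \<sigma>) (x + int N *s s) \<in> iform (facet_form A \<sigma>) ` monoid_of A"
      using K by (simp add: c_def)
  qed
qed



lemma int_span_mem: "(\<chi> i. \<Sum>a\<in>S. k a * a $ i) \<in> int_span S"
  unfolding int_span_def by blast

theorem lemma8p11:
  fixes A :: "(int ^ 'd) set"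
  assumes "finite A"
    and "int_span A = UNIV"
    and "scored A"
    and "\<tau> face_of real_cone A"
  shows "rat_span_lattice {a\<in>A. rvec a \<in> \<tau>} = int_span {a\<in>A. rvec a \<in> \<tau>}"
proof -
  define B where "B = {a\<in>A. rvec a \<in> \<tau>}"
  have fB: "finite B" using assms(1) by (simp add: B_def)
  have BA: "B \<subseteq> A" by (auto simp: B_def)
  have sup: "int_span B \<subseteq> rat_span_lattice B"
  proof
    fix x assume "x \<in> int_span B"
    then obtain k where k: "x = (\<chi> i. \<Sum>a\<in>B. k a * a $ i)" unfolding int_span_def by blast
    have "\<forall>i. rat_of_int (x $ i) = (\<Sum>a\<in>B. rat_of_int (k a) * rat_of_int (a $ i))"
      by (simp add: k)
    then show "x \<in> rat_span_lattice B" unfolding rat_span_lattice_def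
      by (intro CollectI exI[of _ "\<lambda>a. rat_of_int (k a)"])
  qed
  have sub: "rat_span_lattice B \<subseteq> int_span B"
  proof
    fix x assume "x \<in> rat_span_lattice B"
    then obtain q where q: "\<forall>i. rat_of_int (x $ i) = (\<Sum>a\<in>B. q a * rat_of_int (a $ i))"
      unfolding rat_span_lattice_def by blast
    show "x \<in> int_span B"
    proof (cases "\<tau> = {}")
      case True
      then have "B = {}" by (simp add: B_def)
      then have "x = (\<chi> i. \<Sum>a\<in>B. 0 * a $ i)" using q by (simp add: vec_eq_iff)
      then show ?thesis using int_span_mem[of "\<lambda>_. 0" B] by simp
    next
      case False
      then obtain ut where ut: "\<forall>y\<in>real_cone A. ut \<bullet> y \<le> 0" "\<tau> = {y\<in>real_cone A. ut \<bullet> y = 0}"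
        using face_exposed[OF assms(1) assms(4)] by metis
      have rx: "rvec x = (\<Sum>b\<in>B. real_of_rat (q b) *\<^sub>R rvec b)"
      proof -
        have "real_of_int (x $ i) = (\<Sum>b\<in>B. real_of_rat (q b) * real_of_int (b $ i))" for i
        proof -
          have "real_of_int (x $ i) = real_of_rat (rat_of_int (x $ i))" by simp
          also have "\<dots> = real_of_rat (\<Sum>a\<in>B. q a * rat_of_int (a $ i))" using q by simp
          also have "\<dots> = (\<Sum>b\<in>B. real_of_rat (q b) * real_of_int (b $ i))"
            by (simp add: of_rat_sum of_rat_mult)
          finally show ?thesis .
        qed
        then show ?thesis by (simp add: vec_eq_iff sum_component)
      qed
      define s where "s = (\<chi> i. \<Sum>b\<in>B. b $ i)"
      define \<Phi> where "\<Phi> = {\<sigma>. \<sigma> facet_of real_cone A \<and> \<not> \<tau> \<subseteq> \<sigma>}"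
      have f\<Phi>: "finite \<Phi>"
        by (rule finite_subset[OF _ facets_finite[OF assms(1)]]) (auto simp: \<Phi>_def)
      have "\<forall>\<sigma>\<in>\<Phi>. \<exists>N0. \<forall>N\<ge>N0. iform (facet_form A \<sigma>) (x + int N *s s) \<in> iform (facet_form A \<sigma>) ` monoid_of A"
      proof
        fix \<sigma> assume "\<sigma> \<in> \<Phi>"
        then have "\<sigma> facet_of real_cone A" "\<not> \<tau> \<subseteq> \<sigma>" by (auto simp: \<Phi>_def)
        then show "\<exists>N0. \<forall>N\<ge>N0. iform (facet_form A \<sigma>) (x + int N *s s) \<in> iform (facet_form A \<sigma>) ` monoid_of A"
          using per_facet[OF assms(2) assms(1) _ ut, of \<sigma> s x] by (simp add: s_def B_def)
      qed
      then obtain N0 where N0: "\<forall>\<sigma>\<in>\<Phi>. \<forall>N\<ge>N0 \<sigma>. iform (facet_form A \<sigma>) (x + int N *s s) \<in> iform (facet_form A \<sigma>) ` monoid_of A"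
        by metis
      define N where "N = (\<Sum>\<sigma>\<in>\<Phi>. N0 \<sigma>) + (\<Sum>b\<in>B. nat \<lceil>\<bar>real_of_rat (q b)\<bar>\<rceil>)"
      have NN0: "N \<ge> N0 \<sigma>" if "\<sigma> \<in> \<Phi>" for \<sigma>
        using member_le_sum[of \<sigma> \<Phi> N0] that f\<Phi> unfolding N_def by simp
      have Nq: "real_of_rat (q b) + real N \<ge> 0" if "b \<in> B" for b
      proof -
        have "nat \<lceil>\<bar>real_of_rat (q b)\<bar>\<rceil> \<le> (\<Sum>b\<in>B. nat \<lceil>\<bar>real_of_rat (q b)\<bar>\<rceil>)"
          using member_le_sum[of b B "\<lambda>b. nat \<lceil>\<bar>real_of_rat (q b)\<bar>\<rceil>"] that fB by simp
        then have "nat \<lceil>\<bar>real_of_rat (q b)\<bar>\<rceil> \<le> N" unfolding N_def by simp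
        then have "real (nat \<lceil>\<bar>real_of_rat (q b)\<bar>\<rceil>) \<le> real N" by linarith
        moreover have "\<bar>real_of_rat (q b)\<bar> \<le> real (nat \<lceil>\<bar>real_of_rat (q b)\<bar>\<rceil>)"
          by linarith
        ultimately show ?thesis by linarith
      qed
      define y where "y = x + int N *s s"
      have rs: "rvec s = (\<Sum>b\<in>B. rvec b)"
        by (simp add: s_def rvec_def vec_eq_iff sum_component)
      have ry: "rvec y = (\<Sum>b\<in>B. (real_of_rat (q b) + real N) *\<^sub>R rvec b)"
        by (simp add: y_def rvec_add rvec_smult rx rs scaleR_add_left sum.distrib scaleR_sum_right)
      define tt where "tt a = (if rvec a \<in> \<tau> then real_of_rat (q a) + real N else 0)" for a
      have "(\<Sum>a\<in>A. tt a *\<^sub>R rvec a) = (\<Sum>a\<in>A. if rvec a \<in> \<tau> then (real_of_rat (q a) + real N) *\<^sub>R rvec a else 0)"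
        by (rule sum.cong) (auto simp: tt_def)
      also have "\<dots> = (\<Sum>b\<in>B. (real_of_rat (q b) + real N) *\<^sub>R rvec b)"
        unfolding B_def by (rule sum.inter_filter[symmetric, OF assms(1)])
      finally have ryt: "rvec y = (\<Sum>a\<in>A. tt a *\<^sub>R rvec a)" using ry by simp
      have "\<forall>a\<in>A. tt a \<ge> 0" using Nq by (auto simp: tt_def B_def)
      then have ryc: "rvec y \<in> real_cone A" unfolding ryt by (rule real_cone_mem)
      have "ut \<bullet> rvec y = (\<Sum>b\<in>B. (real_of_rat (q b) + real N) * (ut \<bullet> rvec b))"
        by (simp add: ry inner_sum_right)
      also have "\<dots> = 0" by (rule sum.neutral) (use ut(2) in \<open>auto simp: B_def\<close>)
      finally have ryt0: "rvec y \<in> \<tau>" using ryc ut(2) by simp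
      have zm: "(0 :: int^'d) \<in> monoid_of A"
      proof -
        have "(\<chi> i. \<Sum>a\<in>A. int ((\<lambda>_. 0) a) * a $ i) = (0 :: int^'d)" by (simp add: vec_eq_iff)
        then show ?thesis using monoid_mem[of "\<lambda>_. 0" A] by simp
      qed
      have "y \<in> monoid_of A"
      proof -
        have "\<forall>\<sigma>. \<sigma> facet_of real_cone A \<longrightarrow> iform (facet_form A \<sigma>) y \<in> iform (facet_form A \<sigma>) ` monoid_of A"
        proof (intro allI impI)
          fix \<sigma> assume fs: "\<sigma> facet_of real_cone A"
          show "iform (facet_form A \<sigma>) y \<in> iform (facet_form A \<sigma>) ` monoid_of A"
          proof (cases "\<tau> \<subseteq> \<sigma>")
            case True
            then have "rvec y \<in> \<sigma>" using ryt0 by blast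
            then have "rform (facet_form A \<sigma>) (rvec y) = 0"
              using facet_form_props(2)[OF assms(2,1) fs] by blast
            then have "real_of_int (iform (facet_form A \<sigma>) y) = 0"
              using iform_rform[of "facet_form A \<sigma>" y] by simp
            moreover have "iform (facet_form A \<sigma>) 0 = 0" by (simp add: iform_def)
            ultimately have "iform (facet_form A \<sigma>) y = iform (facet_form A \<sigma>) 0" by simp
            then show ?thesis using zm by blast
          next
            case False
            then have "\<sigma> \<in> \<Phi>" using fs by (simp add: \<Phi>_def)
            then show ?thesis using N0 NN0 unfolding y_def by blast
          qed
        qed
        then show ?thesis using assms(3) unfolding scored_def by blast
      qed
      then obtain n where n: "y = (\<chi> i. \<Sum>a\<in>A. int (n a) * a $ i)" unfolding monoid_of_def by blast
      have rny: "rvec y = (\<Sum>a\<in>A. real (n a) *\<^sub>R rvec a)"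
        using rvec_lin[of "\<lambda>a. int (n a)" A] n by simp
      have n0: "n a = 0" if "a \<in> A - B" for a
      proof (rule ccontr)
        assume "n a \<noteq> 0"
        then have "real (n a) > 0" by simp
        moreover have "\<forall>a\<in>A. real (n a) \<ge> 0" by simp
        ultimately have "rvec a \<in> \<tau>"
          using support_in_face[OF assms(1) ut, of "\<lambda>a. real (n a)" a] rny ryt0 that by auto
        then show False using that by (simp add: B_def)
      qed
      have yB: "y $ i = (\<Sum>a\<in>B. int (n a) * a $ i)" for i
      proof -
        have "y $ i = (\<Sum>a\<in>A. int (n a) * a $ i)" using n by simp
        also have "\<dots> = (\<Sum>a\<in>B. int (n a) * a $ i)"
          by (rule sum.mono_neutral_right[OF assms(1) BA]) (simp add: n0)
        finally show ?thesis .
      qed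
      have "x = (\<chi> i. \<Sum>a\<in>B. (int (n a) - int N) * a $ i)"
      proof -
        have "x $ i = (\<Sum>a\<in>B. (int (n a) - int N) * a $ i)" for i
        proof -
          have "x $ i = y $ i - int N * s $ i" by (simp add: y_def)
          also have "\<dots> = (\<Sum>a\<in>B. int (n a) * a $ i) - (\<Sum>a\<in>B. int N * a $ i)"
            by (simp add: yB s_def sum_distrib_left)
          also have "\<dots> = (\<Sum>a\<in>B. (int (n a) - int N) * a $ i)"
            by (simp add: sum_subtractf left_diff_distrib)
          finally show ?thesis .
        qed
        then show ?thesis by (simp add: vec_eq_iff)
      qed
      then show ?thesis using int_span_mem[of "\<lambda>a. int (n a) - int N" B] by simp
    qed
  qed
  show ?thesis using sup sub unfolding B_def by blast
qed


end
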